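(* For every positive integer $k$, every horizontal alternation of length $2k^4$ contains a monotone horizontal alternation of length at least $2k$.
   Context: A permutation $\pi$ contains $\sigma$ if $\pi$ has a subsequence in the same relative order as $\sigma$. A permutation $\pi$ is a horizontal alternation if there are no indices $i<j$ with $\pi_i$ odd and $\pi_j$ even (all even entries precede all odd entries). A monotone horizontal alternation is a horizontal alternation whose subsequence of odd entries and whose subsequence of even entries are each monotone (increasing or decreasing). *)

theory Defs
  imports Main "HOL-Library.Sublist"
begin

definition is_perm :: "nat list \<Rightarrow> bool" where
  "is_perm xs \<longleftrightarrow> distinct xs \<and> set xs = {1..length xs}"

definition order_iso :: "nat list \<Rightarrow> nat list \<Rightarrow> bool" where
  "order_iso xs ys \<longleftrightarrow> length xs = length ys \<and>
     (\<forall>i<length xs. \<forall>j<length xs. (xs ! i < xs ! j) \<longleftrightarrow> (ys ! i < ys ! j))"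

definition contains :: "nat list \<Rightarrow> nat list \<Rightarrow> bool" where
  "contains pi sigma \<longleftrightarrow> (\<exists>ys. subseq ys pi \<and> order_iso ys sigma)"

definition horiz_alt :: "nat list \<Rightarrow> bool" where
  "horiz_alt pi \<longleftrightarrow> is_perm pi \<and>
     \<not> (\<exists>i j. i < j \<and> j < length pi \<and> odd (pi ! i) \<and> even (pi ! j))"

definition monotone_seq :: "nat list \<Rightarrow> bool" where
  "monotone_seq xs \<longleftrightarrow> sorted_wrt (<) xs \<or> sorted_wrt (>) xs"

definition monotone_horiz_alt :: "nat list \<Rightarrow> bool" where
  "monotone_horiz_alt pi \<longleftrightarrow> horiz_alt pi \<and>
     monotone_seq (filter odd pi) \<and> monotone_seq (filter even pi)"

end

theory Submission
  imports Defs
begin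

lemma map_nth_shift:
  "\<forall>j\<in>set js. 0 < j \<Longrightarrow> map ((!) (x#xs)) js = map ((!) xs) (map (\<lambda>j. j - 1) js)"
  by (induction js) (auto simp: nth_Cons')

lemma sorted_shift:
  "sorted_wrt (<) (js::nat list) \<Longrightarrow> \<forall>j\<in>set js. 0 < j \<Longrightarrow> sorted_wrt (<) (map (\<lambda>j. j - 1) js)"
proof (induction js)
  case (Cons a js)
  have "\<forall>x\<in>set js. a - 1 < x - 1"
  proof
    fix x assume "x \<in> set js"
    then have "a < x" "0 < a" using Cons.prems by auto
    then show "a - 1 < x - 1" by arith
  qed
  then show ?case using Cons by auto
qed simp

lemma subseq_map_nth:
  "sorted_wrt (<) js \<Longrightarrow> \<forall>j\<in>set js. j < length xs \<Longrightarrow> subseq (map ((!) xs) js) xs"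
proof (induction xs arbitrary: js)
  case Nil
  then show ?case by (cases js) auto
next
  case (Cons x xs)
  show ?case
  proof (cases js)
    case Nil
    then show ?thesis by simp
  next
    case (Cons j0 js')
    have s': "sorted_wrt (<) js'" and gt: "\<forall>j\<in>set js'. j0 < j"
      using Cons.prems(1) Cons by auto
    show ?thesis
    proof (cases "j0 = 0")
      case True
      have pos: "\<forall>j\<in>set js'. 0 < j" using gt True by auto
      have "sorted_wrt (<) (map (\<lambda>j. j - 1) js')"
        using s' pos by (rule sorted_shift)
      moreover have "\<forall>j\<in>set (map (\<lambda>j. j - 1) js'). j < length xs"
        using Cons.prems(2) Cons pos by auto
      ultimately have r: "subseq (map ((!) xs) (map (\<lambda>j. j - 1) js')) xs"
        using Cons.IH by blast
      have "map ((!) (x#xs)) js = x # map ((!) xs) (map (\<lambda>j. j - 1) js')"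
        using map_nth_shift[OF pos, of x xs] Cons True by (simp only: list.map nth_Cons_0)
      then show ?thesis using r by (metis subseq_Cons2)
    next
      case False
      have pos: "\<forall>j\<in>set js. 0 < j" using gt False Cons by auto
      have "sorted_wrt (<) (map (\<lambda>j. j - 1) js)"
        using Cons.prems(1) pos by (rule sorted_shift)
      moreover have "\<forall>j\<in>set (map (\<lambda>j. j - 1) js). j < length xs"
        using Cons.prems(2) pos by fastforce
      ultimately have "subseq (map ((!) xs) (map (\<lambda>j. j - 1) js)) xs"
        using Cons.IH by blast
      then have "subseq (map ((!) xs) (map (\<lambda>j. j - 1) js)) (x # xs)"
        by (rule list_emb.list_emb_Cons)
      then show ?thesis using map_nth_shift[OF pos, of x xs] by (simp only:)
    qed
  qed
qed

lemma order_iso_map: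
  assumes "\<And>u v. u \<in> set xs \<Longrightarrow> v \<in> set xs \<Longrightarrow> u < v \<Longrightarrow> h u < h v"
  shows "order_iso (map h xs) xs"
  unfolding order_iso_def
proof (intro conjI allI impI)
  fix i j assume i: "i < length (map h xs)" and j: "j < length (map h xs)"
  have a: "xs!i \<in> set xs" "xs!j \<in> set xs" using i j by auto
  show "(map h xs ! i < map h xs ! j) = (xs ! i < xs ! j)"
    using assms[OF a] assms[OF a(2) a(1)] i j
    by (metis length_map less_asym' linorder_neqE nth_map order.irrefl)
qed simp

lemma ES:
  fixes f :: "nat \<Rightarrow> nat" and I :: "nat set"
  assumes fin: "finite I" and inj: "inj_on f I" and card: "n*n \<le> card I"
  shows "\<exists>J\<subseteq>I. card J = n \<and> ((\<forall>a\<in>J. \<forall>b\<in>J. a < b \<longrightarrow> f a < f b) \<or> (\<forall>a\<in>J. \<forall>b\<in>J. a < b \<longrightarrow> f b < f a))"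
proof (cases "n = 0")
  case True
  then show ?thesis by (intro exI[of _ "{}"]) auto
next
  case nz: False
  define incr where "incr J \<longleftrightarrow> (\<forall>a\<in>J. \<forall>b\<in>J. a < b \<longrightarrow> f a < f b)" for J
  define ch where "ch i = {J. J \<subseteq> I \<and> i \<in> J \<and> (\<forall>x\<in>J. x \<le> i) \<and> incr J}" for i
  define L where "L i = Max (card ` ch i)" for i
  have chfin: "finite (card ` ch i)" for i
  proof -
    have "ch i \<subseteq> Pow I" unfolding ch_def by auto
    then show ?thesis using fin by (meson finite_Pow_iff finite_imageI finite_subset)
  qed
  have chne: "{i} \<in> ch i" if "i \<in> I" for i using that unfolding ch_def incr_def by auto
  have Lge: "card J \<le> L i" if "J \<in> ch i" for i J
    unfolding L_def using chfin that by (simp add: Max_ge)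
  have Lin: "\<exists>J\<in>ch i. card J = L i" if "i \<in> I" for i
  proof -
    have "L i \<in> card ` ch i" unfolding L_def using chfin chne[OF that] by (intro Max_in) auto
    then show ?thesis by auto
  qed
  have L1: "1 \<le> L i" if "i \<in> I" for i using Lge[OF chne[OF that]] by simp
  show ?thesis
  proof (cases "\<exists>i\<in>I. n \<le> L i")
    case True
    then obtain i J where i: "i \<in> I" and J: "J \<in> ch i" "n \<le> card J"
      using Lin by (metis)
    obtain T where T: "T \<subseteq> J" "card T = n" using obtain_subset_with_card_n[OF J(2)] by metis
    have "T \<subseteq> I" "incr T" using J(1) T(1) unfolding ch_def incr_def by (auto, meson subsetD)
    then show ?thesis using T(2) unfolding incr_def by blast
  next
    case False
    hence Llt: "\<forall>i\<in>I. L i < n" by auto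
    have step: "L a < L b" if ab: "a \<in> I" "b \<in> I" "a < b" "f a < f b" for a b
    proof -
      obtain J where J: "J \<in> ch a" "card J = L a" using Lin[OF ab(1)] by blast
      have Jp: "J \<subseteq> I" "a \<in> J" "\<forall>x\<in>J. x \<le> a" "incr J" using J(1) unfolding ch_def by auto
      have finJ: "finite J" using Jp(1) fin finite_subset by blast
      have bJ: "b \<notin> J" using Jp(3) ab(3) by fastforce
      have "insert b J \<in> ch b"
        unfolding ch_def
      proof (intro CollectI conjI)
        show "insert b J \<subseteq> I" using Jp ab by auto
        show "b \<in> insert b J" by simp
        show "\<forall>x\<in>insert b J. x \<le> b" using Jp(3) ab(3) by auto
        show "incr (insert b J)" unfolding incr_def
        proof (intro ballI impI)
          fix x y assume x: "x \<in> insert b J" and y: "y \<in> insert b J" and xy: "x < y"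
          show "f x < f y"
          proof (cases "y = b")
            case True
            then have xJ: "x \<in> J" using x xy by auto
            show ?thesis
            proof (cases "x = a")
              case True then show ?thesis using \<open>y = b\<close> ab by simp
            next
              case False
              then have "x < a" using Jp(3) xJ by fastforce
              then have "f x < f a" using Jp(4) xJ Jp(2) unfolding incr_def by blast
              then show ?thesis using \<open>y = b\<close> ab by simp
            qed
          next
            case False
            then have yJ: "y \<in> J" using y by auto
            then have "x \<noteq> b" using Jp(3) xy ab(3) by fastforce
            then have "x \<in> J" using x by auto
            then show ?thesis using yJ xy Jp(4) unfolding incr_def by blast
          qed
        qed
      qed
      then have "card (insert b J) \<le> L b" by (rule Lge)
      then show ?thesis using finJ bJ J(2) by simp
    qed
    define F where "F v = {i\<in>I. L i = v}" for v
    have IU: "I = (\<Union>v\<in>{1..<n}. F v)"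
      unfolding F_def using Llt L1 by fastforce
    have cI: "card I \<le> (\<Sum>v\<in>{1..<n}. card (F v))"
      by (subst IU) (rule card_UN_le, simp)
    have "\<exists>v\<in>{1..<n}. n \<le> card (F v)"
    proof (rule ccontr)
      assume "\<not> ?thesis"
      then have "\<forall>v\<in>{1..<n}. card (F v) \<le> n - 1" by auto
      then have "(\<Sum>v\<in>{1..<n}. card (F v)) \<le> (n - 1) * (n - 1)"
        using sum_bounded_above[of "{1..<n}" "\<lambda>v. card (F v)" "n - 1"] by simp
      moreover have "(n - 1) * (n - 1) < n * n" using nz
        by (metis diff_less less_numeral_extra(1) mult_strict_mono not_gr0 zero_le)
      ultimately show False using cI card by linarith
    qed
    then obtain v where v: "n \<le> card (F v)" by blast
    obtain T where T: "T \<subseteq> F v" "card T = n" using obtain_subset_with_card_n[OF v] by metis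
    have dec: "f b < f a" if "a \<in> T" "b \<in> T" "a < b" for a b
    proof -
      have ab: "a \<in> I" "b \<in> I" "L a = v" "L b = v" using that T(1) unfolding F_def by auto
      have "\<not> f a < f b" using step[OF ab(1,2) that(3)] ab by auto
      moreover have "f a \<noteq> f b" using inj ab(1,2) that(3) by (metis inj_on_eq_iff less_irrefl)
      ultimately show ?thesis by simp
    qed
    have "T \<subseteq> I" using T(1) unfolding F_def by auto
    then show ?thesis using T(2) dec by blast
  qed
qed


lemma aux_lt: "(1::nat) \<le> x \<Longrightarrow> e < e' \<Longrightarrow> 2*x+e-1 < 2*x+e'-1" by linarith

lemma aux_lt2: "(1::nat) \<le> x \<Longrightarrow> x < y \<Longrightarrow> e \<le> 1 \<Longrightarrow> 2*x+e-1 < 2*y+e'-1" by linarith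

lemma side:
  fixes s :: "nat list" and g :: "nat \<Rightarrow> nat"
  assumes srt: "sorted_wrt (<) s"
    and mono: "(\<forall>a\<in>set s. \<forall>b\<in>set s. a<b \<longrightarrow> g a < g b) \<or> (\<forall>a\<in>set s. \<forall>b\<in>set s. a<b \<longrightarrow> g b < g a)"
  shows "\<exists>r. (\<forall>j<length s. r j < length s) \<and> (\<forall>i j. i<j \<longrightarrow> j<length s \<longrightarrow> g (s!r i) < g (s!r j))
     \<and> ((\<forall>i j. i<j \<longrightarrow> j<length s \<longrightarrow> r i < r j) \<or> (\<forall>i j. i<j \<longrightarrow> j<length s \<longrightarrow> r j < r i))"
proof (cases "\<forall>a\<in>set s. \<forall>b\<in>set s. a<b \<longrightarrow> g a < g b")
  case True
  show ?thesis
  proof (intro exI[of _ "\<lambda>j. j"] conjI)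
    show "\<forall>i j. i<j \<longrightarrow> j<length s \<longrightarrow> g (s!i) < g (s!j)"
    proof (intro allI impI)
      fix i j assume ij: "i<j" "j<length s"
      then have "s!i < s!j" using sorted_wrt_nth_less[OF srt] by blast
      moreover have "s!i \<in> set s" "s!j \<in> set s" using ij by auto
      ultimately show "g (s!i) < g (s!j)" using True by blast
    qed
  qed auto
next
  case False
  then have D: "\<forall>a\<in>set s. \<forall>b\<in>set s. a<b \<longrightarrow> g b < g a" using mono by blast
  show ?thesis
  proof (intro exI[of _ "\<lambda>j. length s - 1 - j"] conjI)
    show "\<forall>i j. i<j \<longrightarrow> j<length s \<longrightarrow> g (s!(length s - 1 - i)) < g (s!(length s - 1 - j))"
    proof (intro allI impI)
      fix i j assume ij: "i<j" "j<length s"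
      then have "s!(length s - 1 - j) < s!(length s - 1 - i)" using sorted_wrt_nth_less[OF srt] by simp
      moreover have "s!(length s - 1 - i) \<in> set s" "s!(length s - 1 - j) \<in> set s" using ij by auto
      ultimately show "g (s!(length s - 1 - i)) < g (s!(length s - 1 - j))" using D by blast
    qed
  qed auto
qed

lemma build:
  fixes pi :: "nat list" and p q :: "nat \<Rightarrow> nat" and S :: "nat set"
  assumes SN: "S \<subseteq> {1..N}" and cS: "card S = k"
    and pm: "(\<forall>a\<in>S. \<forall>b\<in>S. a<b \<longrightarrow> p a < p b) \<or> (\<forall>a\<in>S. \<forall>b\<in>S. a<b \<longrightarrow> p b < p a)"
    and qm: "(\<forall>a\<in>S. \<forall>b\<in>S. a<b \<longrightarrow> q a < q b) \<or> (\<forall>a\<in>S. \<forall>b\<in>S. a<b \<longrightarrow> q b < q a)"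
    and pv: "\<And>v. v\<in>{1..N} \<Longrightarrow> p v < length pi \<and> pi!(p v) = 2*v"
    and qv: "\<And>v. v\<in>{1..N} \<Longrightarrow> q v < length pi \<and> pi!(q v) = 2*v - 1"
    and pq: "\<And>v w. v\<in>{1..N} \<Longrightarrow> w\<in>{1..N} \<Longrightarrow> p v < q w"
  shows "\<exists>sigma. monotone_horiz_alt sigma \<and> length sigma \<ge> 2*k \<and> contains pi sigma"
proof -
  define s where "s = sorted_list_of_set S"
  have finS: "finite S" using SN finite_subset by blast
  have slen: "length s = k" using cS s_def by simp
  have sset: "set s = S" using finS s_def by simp
  have ssrt: "sorted_wrt (<) s" unfolding s_def by (rule strict_sorted_list_of_set)
  have sN: "s!a \<in> {1..N}" if "a < k" for a using that sset slen SN nth_mem by blast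
  have sless: "s!a < s!b" if "a<b" "b<k" for a b using sorted_wrt_nth_less[OF ssrt] that slen by blast
  obtain re where re: "\<forall>j<k. re j < k" "\<forall>i j. i<j \<longrightarrow> j<k \<longrightarrow> p (s!re i) < p (s!re j)"
      "(\<forall>i j. i<j \<longrightarrow> j<k \<longrightarrow> re i < re j) \<or> (\<forall>i j. i<j \<longrightarrow> j<k \<longrightarrow> re j < re i)"
    using side[OF ssrt, of p] pm sset slen by auto
  obtain ro where ro: "\<forall>j<k. ro j < k" "\<forall>i j. i<j \<longrightarrow> j<k \<longrightarrow> q (s!ro i) < q (s!ro j)"
      "(\<forall>i j. i<j \<longrightarrow> j<k \<longrightarrow> ro i < ro j) \<or> (\<forall>i j. i<j \<longrightarrow> j<k \<longrightarrow> ro j < ro i)"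
    using side[OF ssrt, of q] qm sset slen by auto
  have reinj: "inj_on re {0..<k}"
    using re(3) unfolding inj_on_def by (metis atLeastLessThan_iff linorder_neqE_nat less_irrefl)
  have roinj: "inj_on ro {0..<k}"
    using ro(3) unfolding inj_on_def by (metis atLeastLessThan_iff linorder_neqE_nat less_irrefl)
  define A where "A = map (\<lambda>j. 2*(re j+1)) [0..<k]"
  define B where "B = map (\<lambda>j. 2*(ro j)+1) [0..<k]"
  define sigma where "sigma = A @ B"
  define js where "js = map (\<lambda>j. p (s!re j)) [0..<k] @ map (\<lambda>j. q (s!ro j)) [0..<k]"
  define h where "h v = 2 * s!((v-1) div 2) + (v-1) mod 2 - 1" for v
  have hA: "h (2*(re j+1)) = 2 * s!(re j)" for j
  proof -
    have "2*(re j+1) - 1 = 2 * re j + 1" by simp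
    then show ?thesis unfolding h_def by simp
  qed
  have hB: "h (2*(ro j)+1) = 2 * s!(ro j) - 1" for j
    unfolding h_def by simp
  have ys: "map ((!) pi) js = map h sigma"
    unfolding js_def sigma_def A_def B_def
    using pv qv sN re(1) ro(1) hA hB by auto
  have js_sorted: "sorted_wrt (<) js"
    unfolding js_def sorted_wrt_append
  proof (intro conjI)
    show "sorted_wrt (<) (map (\<lambda>j. p (s!re j)) [0..<k])"
      unfolding sorted_wrt_iff_nth_less using re(2) by auto
    show "sorted_wrt (<) (map (\<lambda>j. q (s!ro j)) [0..<k])"
      unfolding sorted_wrt_iff_nth_less using ro(2) by auto
    show "\<forall>x\<in>set (map (\<lambda>j. p (s!re j)) [0..<k]). \<forall>y\<in>set (map (\<lambda>j. q (s!ro j)) [0..<k]). x < y"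
      using pq sN re(1) ro(1) by auto
  qed
  have js_len: "\<forall>j\<in>set js. j < length pi"
    unfolding js_def using pv qv sN re(1) ro(1) by auto
  have subs: "subseq (map ((!) pi) js) pi" by (rule subseq_map_nth[OF js_sorted js_len])
  have setsig: "set sigma \<subseteq> {1..2*k}"
    unfolding sigma_def A_def B_def using re(1) ro(1) by fastforce
  have hmono: "h u < h v" if uv: "1 \<le> u" "u < v" "v \<le> 2*k" for u v
  proof -
    define a where "a = (u-1) div 2"
    define b where "b = (v-1) div 2"
    have ab: "a \<le> b" "b < k" unfolding a_def b_def using uv by (auto intro: div_le_mono)
    have sa: "1 \<le> s!a" "1 \<le> s!b" using sN ab by force+
    have hu: "h u = 2*s!a + (u-1) mod 2 - 1" unfolding h_def a_def by simp
    have hv: "h v = 2*s!b + (v-1) mod 2 - 1" unfolding h_def b_def by simp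
    have m1: "(u-1) mod 2 \<le> 1" "(v-1) mod 2 \<le> 1" by auto
    have du: "u - 1 = 2*a + (u-1) mod 2" and dv: "v - 1 = 2*b + (v-1) mod 2"
      unfolding a_def b_def by simp_all
    show ?thesis
    proof (cases "a < b")
      case True
      then have "s!a < s!b" using sless ab by blast
      then show ?thesis unfolding hu hv by (rule aux_lt2[OF sa(1) _ m1(1)])
    next
      case False
      then have "a = b" using ab by simp
      then have m: "(u-1) mod 2 < (v-1) mod 2" using du dv uv by linarith
      have e: "s!b = s!a" using \<open>a = b\<close> by simp
      show ?thesis unfolding hu hv e by (rule aux_lt[OF sa(1) m])
    qed
  qed
  have oi: "order_iso (map h sigma) sigma"
  proof (rule order_iso_map)
    fix u v assume uv: "u \<in> set sigma" "v \<in> set sigma" "u < v"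
    then have "1 \<le> u" "v \<le> 2*k" using setsig by auto
    then show "h u < h v" using hmono uv(3) by blast
  qed
  have lsig: "length sigma = 2*k" unfolding sigma_def A_def B_def by simp
  have Aeven: "\<forall>x\<in>set A. even x" unfolding A_def by auto
  have Bodd: "\<forall>x\<in>set B. odd x" unfolding B_def by auto
  have dist: "distinct sigma"
    unfolding sigma_def distinct_append
  proof (intro conjI)
    show "distinct A" unfolding A_def distinct_map using reinj by (auto simp: inj_on_def)
    show "distinct B" unfolding B_def distinct_map using roinj by (auto simp: inj_on_def)
    show "set A \<inter> set B = {}" using Aeven Bodd by auto
  qed
  have setsig2: "set sigma = {1..2*k}"
  proof (rule card_subset_eq)
    show "card (set sigma) = card {1..2*k}" using distinct_card[OF dist] lsig by simp
  qed (use setsig in auto)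
  have par: "\<not> (\<exists>i j. i < j \<and> j < length sigma \<and> odd (sigma ! i) \<and> even (sigma ! j))"
  proof
    assume "\<exists>i j. i < j \<and> j < length sigma \<and> odd (sigma ! i) \<and> even (sigma ! j)"
    then obtain i j where ij: "i < j" "j < length sigma" "odd (sigma ! i)" "even (sigma ! j)" by blast
    have lA: "length A = k" "length B = k" unfolding A_def B_def by auto
    have "\<not> i < k"
    proof
      assume "i < k"
      then have "sigma!i = A!i" unfolding sigma_def using lA by (simp add: nth_append)
      then show False using Aeven ij(3) \<open>i<k\<close> lA by (metis nth_mem)
    qed
    then have "sigma!j = B!(j-k)" unfolding sigma_def using lA ij by (simp add: nth_append)
    moreover have "j - k < length B" using ij lA lsig by simp
    ultimately show False using Bodd ij(4) by (metis nth_mem)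
  qed
  have fo: "filter odd sigma = B" unfolding sigma_def using Aeven Bodd
    by (simp add: filter_empty_conv)
  have fe: "filter even sigma = A" unfolding sigma_def using Aeven Bodd
    by (simp add: filter_empty_conv)
  have mA: "monotone_seq A"
    using re(3) unfolding monotone_seq_def A_def sorted_wrt_iff_nth_less by auto
  have mB: "monotone_seq B"
    using ro(3) unfolding monotone_seq_def B_def sorted_wrt_iff_nth_less by auto
  have "monotone_horiz_alt sigma"
    unfolding monotone_horiz_alt_def horiz_alt_def is_perm_def
    using dist setsig2 lsig par fo fe mA mB by simp
  moreover have "contains pi sigma"
    unfolding contains_def using subs oi unfolding ys by blast
  ultimately show ?thesis using lsig by auto
qed


theorem mainTheorem10:
  fixes k :: nat and pi :: "nat list"
  assumes "k > 0" and "horiz_alt pi" and "length pi = 2 * k ^ 4"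
  shows "\<exists>sigma. monotone_horiz_alt sigma \<and> length sigma \<ge> 2 * k \<and> contains pi sigma"
proof -
  define N where "N = k^4"
  have len: "length pi = 2*N" using assms(3) N_def by simp
  have dist: "distinct pi" and setpi: "set pi = {1..2*N}"
    using assms(2) len unfolding horiz_alt_def is_perm_def by auto
  have noalt: "\<And>i j. i < j \<Longrightarrow> j < length pi \<Longrightarrow> odd (pi!i) \<Longrightarrow> even (pi!j) \<Longrightarrow> False"
    using assms(2) unfolding horiz_alt_def by blast
  define p where "p v = inv_into {..<2*N} ((!) pi) (2*v)" for v
  define q where "q v = inv_into {..<2*N} ((!) pi) (2*v - 1)" for v
  have img: "(!) pi ` {..<2*N} = set pi" using len by (auto simp: in_set_conv_nth image_iff)
  have pv: "p v < length pi \<and> pi!(p v) = 2*v" if "v \<in> {1..N}" for v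
  proof -
    have "2*v \<in> (!) pi ` {..<2*N}" using that img setpi by auto
    then show ?thesis unfolding p_def using len
      by (metis inv_into_into f_inv_into_f lessThan_iff)
  qed
  have qv: "q v < length pi \<and> pi!(q v) = 2*v - 1" if "v \<in> {1..N}" for v
  proof -
    have "2*v - 1 \<in> (!) pi ` {..<2*N}" using that img setpi by auto
    then show ?thesis unfolding q_def using len
      by (metis inv_into_into f_inv_into_f lessThan_iff)
  qed
  have pq: "p v < q w" if "v \<in> {1..N}" "w \<in> {1..N}" for v w
  proof -
    have a: "pi!(p v) = 2*v" "pi!(q w) = 2*w - 1" "p v < length pi" "q w < length pi"
      using pv[OF that(1)] qv[OF that(2)] by auto
    have ow: "odd (2*w - 1)" using that(2) by auto
    have "p v \<noteq> q w"
    proof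
      assume "p v = q w"
      then have "2*v = 2*w - 1" using a by simp
      then show False using ow by (metis dvd_triv_left)
    qed
    moreover have "\<not> q w < p v" using noalt[of "q w" "p v"] a ow by auto
    ultimately show ?thesis by simp
  qed
  have injp: "inj_on p {1..N}"
    by (rule inj_onI) (metis pv mult_left_cancel zero_neq_numeral)
  have injq: "inj_on q {1..N}"
  proof (rule inj_onI)
    fix v w assume vw: "v \<in> {1..N}" "w \<in> {1..N}" "q v = q w"
    then have "2*v - 1 = 2*w - 1" using qv by metis
    then show "v = w" using vw(1,2) by auto
  qed
  have kk: "k^2 * k^2 = k^4" using power_add[of k 2 2] by simp
  have c1: "k^2 * k^2 \<le> card {1..N}" unfolding kk N_def by simp
  obtain J1 where J1: "J1 \<subseteq> {1..N}" "card J1 = k^2"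
      "(\<forall>a\<in>J1. \<forall>b\<in>J1. a < b \<longrightarrow> p a < p b) \<or> (\<forall>a\<in>J1. \<forall>b\<in>J1. a < b \<longrightarrow> p b < p a)"
    using ES[OF _ injp c1] by auto
  have finJ1: "finite J1" using J1(1) finite_subset by blast
  have injq1: "inj_on q J1" using injq J1(1) inj_on_subset by blast
  have c2: "k*k \<le> card J1" using J1(2) by (simp add: power2_eq_square)
  obtain S where S: "S \<subseteq> J1" "card S = k"
      "(\<forall>a\<in>S. \<forall>b\<in>S. a < b \<longrightarrow> q a < q b) \<or> (\<forall>a\<in>S. \<forall>b\<in>S. a < b \<longrightarrow> q b < q a)"
    using ES[OF finJ1 injq1 c2] by auto
  have pS: "(\<forall>a\<in>S. \<forall>b\<in>S. a < b \<longrightarrow> p a < p b) \<or> (\<forall>a\<in>S. \<forall>b\<in>S. a < b \<longrightarrow> p b < p a)"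
    using J1(3) S(1) by blast
  have SN: "S \<subseteq> {1..N}" using S(1) J1(1) by blast
  show ?thesis by (rule build[OF SN S(2) pS S(3) pv qv pq])
qed

end
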